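(* Let $T>0$, let $F:\mathbb{R}^n\rightrightarrows\mathbb{R}^n$ be a set-valued mapping with closed graph, and let $f:[0,T]\times\mathbb{R}^n\to\mathbb{R}^n$ be continuously differentiable. Let $x:[0,T]\to\mathbb{R}^n$ be continuous with $0\in f(t,x(t))+F(x(t))$ for each $t\in[0,T]$, and set $W:=\{(x(t),-f(t,x(t))):t\in[0,T]\}$. Suppose $F$ is uniformly semismooth$^*$ on $W$. Then for each $\varepsilon>0$ there is $\delta>0$ such that for each $t\in[0,T]$, each $(x,y)\in(B[x(t),\delta]\times B[0,\delta])\cap\operatorname{gph}(f(t,\cdot)+F)$ and each $(y^*,x^* )\in\operatorname{gph}D^*(f(t,\cdot)+F)(x,y)$ we have $$|\langle x^*,x-x(t)\rangle-\langle y^*,y\rangle|\le\varepsilon\|(x^*,y^* )\|\,\|(x,y)-(x(t),0)\|.$$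
   Context: Euclidean norm on $\mathbb{R}^n$, max-norm $\|(a,b)\|=\max\{\|a\|,\|b\|\}$ on products; $B[z,r]$ is the closed ball. The limiting coderivative of a set-valued map $G$ at $(x,y)\in\operatorname{gph}G$ is given by $\operatorname{gph}D^*G(x,y)=\{(y^*,x^* ):(x^*,-y^* )\in N_{\operatorname{gph}G}(x,y)\}$, $N$ the limiting normal cone. $F$ is uniformly semismooth$^*$ on a set $W$ if for each $\varepsilon>0$ there is $\delta>0$ such that for each $(u,z)\in W$, each $(x,y)\in(B[u,\delta]\times B[z,\delta])\cap\operatorname{gph}F$ and each $(y^*,x^* )\in\operatorname{gph}D^*F(x,y)$: $|\langle x^*,x-u\rangle-\langle y^*,y-z\rangle|\le\varepsilon\|(x^*,y^* )\|\,\|(x,y)-(u,z)\|$. *)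

theory Defs
  imports "HOL-Analysis.Analysis"
begin

definition gph :: "('a \<Rightarrow> 'b set) \<Rightarrow> ('a \<times> 'b) set" where
  "gph G = {(x, y). y \<in> G x}"

definition pnorm :: "('a::real_normed_vector \<times> 'b::real_normed_vector) \<Rightarrow> real" where
  "pnorm p = max (norm (fst p)) (norm (snd p))"

definition regular_normal_cone :: "'a::real_inner set \<Rightarrow> 'a \<Rightarrow> 'a set" where
  "regular_normal_cone S z =
     (if z \<in> S then {v. \<forall>e>0. \<exists>d>0. \<forall>z'\<in>S. norm (z' - z) < d \<longrightarrow> inner v (z' - z) \<le> e * norm (z' - z)}
      else {})"

definition limiting_normal_cone :: "'a::real_inner set \<Rightarrow> 'a \<Rightarrow> 'a set" where
  "limiting_normal_cone S z =
     (if z \<in> S then {v. \<exists>zs vs. (\<forall>k. zs k \<in> S \<and> vs k \<in> regular_normal_cone S (zs k))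
                              \<and> zs \<longlonglongrightarrow> z \<and> vs \<longlonglongrightarrow> v}
      else {})"

definition coderiv_gph :: "('a::real_inner \<Rightarrow> 'b::real_inner set) \<Rightarrow> 'a \<Rightarrow> 'b \<Rightarrow> ('b \<times> 'a) set" where
  "coderiv_gph G x y = {(ys, xs). (xs, - ys) \<in> limiting_normal_cone (gph G) (x, y)}"

definition uniformly_semismooth_star :: "('a::euclidean_space \<Rightarrow> 'a set) \<Rightarrow> ('a \<times> 'a) set \<Rightarrow> bool" where
  "uniformly_semismooth_star F W \<longleftrightarrow>
     (\<forall>e>0. \<exists>d>0. \<forall>(u, z)\<in>W. \<forall>(x, y)\<in>(cball u d \<times> cball z d) \<inter> gph F.
        \<forall>(ys, xs)\<in>coderiv_gph F x y.
          \<bar>inner xs (x - u) - inner ys (y - z)\<bar> \<le> e * pnorm (xs, ys) * pnorm ((x, y) - (u, z)))"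

end

theory Submission
  imports Defs
begin

definition adjT :: "('a::euclidean_space \<Rightarrow> 'b::real_inner) \<Rightarrow> 'b \<Rightarrow> 'a" where
  "adjT A b = (\<Sum>i\<in>Basis. (inner b (A i)) *\<^sub>R i)"

lemma adjT_inner:
  assumes "linear A"
  shows "inner (adjT A b) h = inner b (A h)"
proof -
  have "inner b (A h) = inner b (A (\<Sum>i\<in>Basis. (inner h i) *\<^sub>R i))"
    by (simp add: euclidean_representation)
  also have "\<dots> = (\<Sum>i\<in>Basis. inner h i * inner b (A i))"
    using assms by (simp add: linear_sum linear_scale inner_sum_right)
  moreover have "inner (adjT A b) h = (\<Sum>i\<in>Basis. inner h i * inner b (A i))"
    unfolding adjT_def inner_sum_left by (simp add: inner_commute[of _ h] mult.commute)
  ultimately show ?thesis by simp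
qed

lemma adjT_neg: "adjT A (- b) = - adjT A b"
  by (simp add: adjT_def sum_negf)

lemma adjT_norm:
  assumes "linear A" "\<And>h. norm (A h) \<le> L * norm h" "L \<ge> 0"
  shows "norm (adjT A b) \<le> L * norm b"
proof -
  let ?w = "adjT A b"
  have "norm ?w ^ 2 = inner b (A ?w)"
    using adjT_inner[OF assms(1)] by (simp add: power2_norm_eq_inner)
  also have "\<dots> \<le> norm b * norm (A ?w)" by (rule Cauchy_Schwarz_ineq2[THEN order_trans[OF abs_ge_self]])
  also have "\<dots> \<le> norm b * (L * norm ?w)" using assms(2) by (simp add: mult_left_mono)
  finally have *: "norm ?w * norm ?w \<le> (L * norm b) * norm ?w" by (simp add: power2_eq_square algebra_simps)
  show ?thesis
  proof (cases "norm ?w = 0")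
    case True
    then show ?thesis using assms(3) by simp
  next
    case False
    then show ?thesis using * by (simp add: mult_le_cancel_right)
  qed
qed

lemma gph_shift_iff:
  fixes g :: "'a \<Rightarrow> 'b::ab_group_add"
  shows "((x, y) \<in> gph (\<lambda>z. (\<lambda>v. g z + v) ` F z)) \<longleftrightarrow> (x, y - g x) \<in> gph F"
  unfolding gph_def by (auto simp: image_iff intro!: bexI[where x="y - g x"])

lemma reg_transform:
  fixes g :: "'a::euclidean_space \<Rightarrow> 'b::euclidean_space"
  assumes dg: "(g has_derivative D) (at x0)"
    and ab: "(a, b) \<in> regular_normal_cone (gph (\<lambda>z. (\<lambda>v. g z + v) ` F z)) (x0, g x0 + v0)"
  shows "(a + adjT D b, b) \<in> regular_normal_cone (gph F) (x0, v0)"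
proof -
  let ?G = "gph (\<lambda>z. (\<lambda>v. g z + v) ` F z)"
  have memG: "(x0, g x0 + v0) \<in> ?G"
  proof (rule ccontr)
    assume "(x0, g x0 + v0) \<notin> ?G"
    then have "regular_normal_cone ?G (x0, g x0 + v0) = {}" by (simp add: regular_normal_cone_def)
    with ab show False by simp
  qed
  then have mem: "(x0, v0) \<in> gph F" using gph_shift_iff[of x0 "g x0 + v0" g F] by simp
  have bl: "bounded_linear D" using dg by (simp add: has_derivative_def)
  then have lin: "linear D" by (simp add: bounded_linear.linear)
  obtain M where M: "M > 0" "\<And>h. norm (D h) \<le> M * norm h" using linear_bounded_pos[OF lin] by blast
  have abG: "\<forall>e>0. \<exists>d>0. \<forall>z'\<in>?G. norm (z' - (x0, g x0 + v0)) < d \<longrightarrow>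
      inner (a, b) (z' - (x0, g x0 + v0)) \<le> e * norm (z' - (x0, g x0 + v0))"
    using ab memG unfolding regular_normal_cone_def by simp
  have dg': "\<forall>e>0. \<exists>d>0. \<forall>y. norm (y - x0) < d \<longrightarrow> norm (g y - g x0 - D (y - x0)) \<le> e * norm (y - x0)"
    using dg by (simp add: has_derivative_at_alt)
  have "\<forall>e>0. \<exists>d>0. \<forall>z'\<in>gph F. norm (z' - (x0, v0)) < d \<longrightarrow>
      inner (a + adjT D b, b) (z' - (x0, v0)) \<le> e * norm (z' - (x0, v0))"
  proof (intro allI impI)
    fix e :: real assume e: "e > 0"
    define e1 where "e1 = e / (2 * (M + 3))"
    define \<eta> where "\<eta> = min 1 (e / (2 * (norm b + 1)))"
    have e1: "e1 > 0" using e M by (simp add: e1_def)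
    have eta: "\<eta> > 0" "\<eta> \<le> 1" "norm b * \<eta> \<le> e / 2"
    proof -
      have "0 < e / (2 * (norm b + 1))" using e by (intro divide_pos_pos) (auto intro: add_nonneg_pos)
      then show "\<eta> > 0" "\<eta> \<le> 1" by (auto simp: \<eta>_def)
      have "norm b * \<eta> \<le> norm b * (e / (2 * (norm b + 1)))"
        by (rule mult_left_mono) (auto simp: \<eta>_def)
      also have "\<dots> = e / 2 * (norm b / (norm b + 1))" by (simp add: field_simps)
      also have "\<dots> \<le> e / 2 * 1" using e by (intro mult_left_mono) (auto simp: divide_le_eq_1 add_nonneg_pos)
      also have "\<dots> = e / 2" by simp
      finally show "norm b * \<eta> \<le> e / 2" .
    qed
    obtain d1 where d1: "d1 > 0" "\<forall>z'\<in>?G. norm (z' - (x0, g x0 + v0)) < d1 \<longrightarrow>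
      inner (a, b) (z' - (x0, g x0 + v0)) \<le> e1 * norm (z' - (x0, g x0 + v0))"
      using abG e1 by blast
    obtain \<rho> where rho: "\<rho> > 0" "\<forall>y. norm (y - x0) < \<rho> \<longrightarrow> norm (g y - g x0 - D (y - x0)) \<le> \<eta> * norm (y - x0)"
      using dg' eta by blast
    define d where "d = min \<rho> (d1 / (M + 3))"
    have d: "d > 0" using rho d1 M by (simp add: d_def)
    show "\<exists>d>0. \<forall>z'\<in>gph F. norm (z' - (x0, v0)) < d \<longrightarrow>
      inner (a + adjT D b, b) (z' - (x0, v0)) \<le> e * norm (z' - (x0, v0))"
    proof (intro exI[of _ d] conjI ballI impI d)
      fix z' assume z': "z' \<in> gph F" and zd: "norm (z' - (x0, v0)) < d"
      obtain x' v' where zz: "z' = (x', v')" by (cases z')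
      define h where "h = x' - x0"
      define k where "k = v' - v0"
      define r where "r = g x' - g x0 - D h"
      define N where "N = norm (z' - (x0, v0))"
      have Neq: "N = norm (h, k)" by (simp add: N_def zz h_def k_def)
      have hN: "norm h \<le> N" and kN: "norm k \<le> N" unfolding Neq
        using norm_fst_le[of h k] norm_snd_le[of k h] by auto
      have "N < d" using zd N_def by simp
      then have "norm h < \<rho>" using hN by (simp add: d_def)
      then have rb: "norm r \<le> \<eta> * norm h" using rho(2) by (simp add: r_def h_def)
      also have "\<dots> \<le> N" using eta hN by (metis mult_le_one norm_ge_zero mult.commute order_trans mult_right_mono mult_1 dual_order.trans)
      finally have rN: "norm r \<le> N" .
      have zG: "(x', g x' + v') \<in> ?G" using z' zz gph_shift_iff[of x' "g x' + v'" g F] by simp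
      have diff: "(x', g x' + v') - (x0, g x0 + v0) = (h, D h + r + k)"
        by (simp add: h_def k_def r_def)
      have "norm (h, D h + r + k) \<le> norm h + norm (D h + r + k)" by (rule norm_Pair_le)
      also have "\<dots> \<le> norm h + (norm (D h) + norm r + norm k)"
        by (simp add: norm_triangle_le)
      also have "\<dots> \<le> N + (M * N + N + N)"
        using hN kN rN M(2)[of h] mult_left_mono[OF hN, of M] M(1) by linarith
      finally have nb: "norm (h, D h + r + k) \<le> (M + 3) * N" by (simp add: algebra_simps)
      also have "\<dots> < (M + 3) * d" using \<open>N < d\<close> M by simp
      also have "\<dots> \<le> (M + 3) * (d1 / (M + 3))" using M by (intro mult_left_mono) (auto simp: d_def)
      also have "\<dots> = d1" using M by simp
      finally have "norm ((x', g x' + v') - (x0, g x0 + v0)) < d1" using diff by simp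
      then have "inner (a, b) (h, D h + r + k) \<le> e1 * norm (h, D h + r + k)"
        using d1(2) zG diff by metis
      also have "\<dots> \<le> e1 * ((M + 3) * N)" using nb e1 by (simp add: mult_left_mono)
      also have "\<dots> = e / 2 * N" using M by (simp add: e1_def field_simps)
      finally have I1: "inner a h + inner b (D h) + inner b k + inner b r \<le> e / 2 * N"
        by (simp add: inner_add_right)
      have "\<bar>inner b r\<bar> \<le> norm b * norm r" by (rule Cauchy_Schwarz_ineq2)
      also have "\<dots> \<le> norm b * (\<eta> * norm h)" by (simp add: mult_left_mono rb)
      also have "\<dots> \<le> (norm b * \<eta>) * N" using hN eta by (simp add: mult_left_mono mult.assoc)
      also have "\<dots> \<le> e / 2 * N" using eta(3) order_trans[OF norm_ge_zero hN] by (intro mult_right_mono)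
      finally have I2: "\<bar>inner b r\<bar> \<le> e / 2 * N" .
      have "inner (a + adjT D b, b) (z' - (x0, v0)) = inner a h + inner b (D h) + inner b k"
        by (simp add: zz h_def k_def inner_add_left adjT_inner[OF lin])
      also have "\<dots> \<le> e * N" using I1 I2 by linarith
      finally show "inner (a + adjT D b, b) (z' - (x0, v0)) \<le> e * norm (z' - (x0, v0))" by (simp add: N_def)
    qed
  qed
  then show ?thesis using mem unfolding regular_normal_cone_def by simp
qed

lemma lim_transform:
  fixes g :: "'a::euclidean_space \<Rightarrow> 'b::euclidean_space"
  assumes dg: "\<And>x. (g has_derivative D x) (at x)"
    and cD: "\<And>h. isCont (\<lambda>x. D x h) x0"
    and ab: "(a, b) \<in> limiting_normal_cone (gph (\<lambda>z. (\<lambda>v. g z + v) ` F z)) (x0, y0)"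
  shows "(a + adjT (D x0) b, b) \<in> limiting_normal_cone (gph F) (x0, y0 - g x0)"
proof -
  let ?G = "gph (\<lambda>z. (\<lambda>v. g z + v) ` F z)"
  have memG: "(x0, y0) \<in> ?G"
  proof (rule ccontr)
    assume "(x0, y0) \<notin> ?G"
    then have "limiting_normal_cone ?G (x0, y0) = {}" by (simp add: limiting_normal_cone_def)
    with ab show False by simp
  qed
  then have mem: "(x0, y0 - g x0) \<in> gph F" using gph_shift_iff[of x0 y0 g F] by simp
  obtain zs vs where zv: "\<And>k. zs k \<in> ?G" "\<And>k. vs k \<in> regular_normal_cone ?G (zs k)"
    "zs \<longlonglongrightarrow> (x0, y0)" "vs \<longlonglongrightarrow> (a, b)"
  proof -
    have "\<exists>zs vs. (\<forall>k. zs k \<in> ?G \<and> vs k \<in> regular_normal_cone ?G (zs k))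
       \<and> zs \<longlonglongrightarrow> (x0, y0) \<and> vs \<longlonglongrightarrow> (a, b)"
      using ab memG unfolding limiting_normal_cone_def by simp
    then show ?thesis using that by blast
  qed
  define zs' where "zs' k = (fst (zs k), snd (zs k) - g (fst (zs k)))" for k
  define vs' where "vs' k = (fst (vs k) + adjT (D (fst (zs k))) (snd (vs k)), snd (vs k))" for k
  have A: "zs' k \<in> gph F" for k
    using zv(1)[of k] gph_shift_iff[of "fst (zs k)" "snd (zs k)" g F] by (simp add: zs'_def)
  have B: "vs' k \<in> regular_normal_cone (gph F) (zs' k)" for k
  proof -
    have eq: "zs k = (fst (zs k), g (fst (zs k)) + (snd (zs k) - g (fst (zs k))))" by simp
    have "(fst (vs k), snd (vs k)) \<in> regular_normal_cone ?G (fst (zs k), g (fst (zs k)) + (snd (zs k) - g (fst (zs k))))"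
      using zv(2)[of k] eq by (metis prod.collapse)
    from reg_transform[OF dg this] show ?thesis by (simp add: vs'_def zs'_def)
  qed
  have xk: "(\<lambda>k. fst (zs k)) \<longlonglongrightarrow> x0" using tendsto_fst[OF zv(3)] by simp
  have yk: "(\<lambda>k. snd (zs k)) \<longlonglongrightarrow> y0" using tendsto_snd[OF zv(3)] by simp
  have ak: "(\<lambda>k. fst (vs k)) \<longlonglongrightarrow> a" using tendsto_fst[OF zv(4)] by simp
  have bk: "(\<lambda>k. snd (vs k)) \<longlonglongrightarrow> b" using tendsto_snd[OF zv(4)] by simp
  have gc: "isCont g x0" using dg[of x0] by (rule has_derivative_continuous)
  have gk: "(\<lambda>k. g (fst (zs k))) \<longlonglongrightarrow> g x0" by (rule isCont_tendsto_compose[OF gc xk])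
  have Dk: "(\<lambda>k. D (fst (zs k)) i) \<longlonglongrightarrow> D x0 i" for i
    by (rule isCont_tendsto_compose[OF cD xk])
  have adk: "(\<lambda>k. adjT (D (fst (zs k))) (snd (vs k))) \<longlonglongrightarrow> adjT (D x0) b"
    unfolding adjT_def by (intro tendsto_intros bk Dk)
  have C: "zs' \<longlonglongrightarrow> (x0, y0 - g x0)" unfolding zs'_def
    by (intro tendsto_intros xk yk gk)
  have E: "vs' \<longlonglongrightarrow> (a + adjT (D x0) b, b)" unfolding vs'_def
    by (intro tendsto_intros ak adk bk)
  have "\<exists>zs vs. (\<forall>k. zs k \<in> gph F \<and> vs k \<in> regular_normal_cone (gph F) (zs k))
      \<and> zs \<longlonglongrightarrow> (x0, y0 - g x0) \<and> vs \<longlonglongrightarrow> (a + adjT (D x0) b, b)"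
    using A B C E by blast
  then show ?thesis unfolding limiting_normal_cone_def using mem by simp
qed
theorem theorem3p2:
  fixes T :: real
    and F :: "'a::euclidean_space \<Rightarrow> 'a set"
    and f :: "real \<Rightarrow> 'a \<Rightarrow> 'a"
    and f' :: "real \<times> 'a \<Rightarrow> (real \<times> 'a) \<Rightarrow>\<^sub>L 'a"
    and xt :: "real \<Rightarrow> 'a"
  assumes "T > 0"
    and "closed (gph F)"
    and "\<And>p. p \<in> {0..T} \<times> UNIV \<Longrightarrow>
           ((\<lambda>q. f (fst q) (snd q)) has_derivative blinfun_apply (f' p)) (at p within {0..T} \<times> UNIV)"
    and "continuous_on ({0..T} \<times> UNIV) f'"
    and "continuous_on {0..T} xt"
    and "\<And>t. t \<in> {0..T} \<Longrightarrow> 0 \<in> (\<lambda>v. f t (xt t) + v) ` F (xt t)"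
    and "uniformly_semismooth_star F ((\<lambda>t. (xt t, - f t (xt t))) ` {0..T})"
  shows "\<forall>e>0. \<exists>d>0. \<forall>t\<in>{0..T}.
           \<forall>(x, y)\<in>(cball (xt t) d \<times> cball 0 d) \<inter> gph (\<lambda>z. (\<lambda>v. f t z + v) ` F z).
             \<forall>(ys, xs)\<in>coderiv_gph (\<lambda>z. (\<lambda>v. f t z + v) ` F z) x y.
               \<bar>inner xs (x - xt t) - inner ys y\<bar> \<le> e * pnorm (xs, ys) * pnorm ((x, y) - (xt t, 0))"
proof -
  define S0 where "S0 = {0..T} \<times> (UNIV :: 'a set)"
  define F2 where "F2 = (\<lambda>q. f (fst q) (snd q))"
  have der: "\<And>p. p \<in> S0 \<Longrightarrow> (F2 has_derivative blinfun_apply (f' p)) (at p within S0)"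
    using assms(3) unfolding S0_def F2_def by blast
  have cf': "continuous_on S0 f'" using assms(4) by (simp add: S0_def)
  have dg: "(f t has_derivative (\<lambda>h. f' (t, x) (0, h))) (at x)" if t: "t \<in> {0..T}" for t x
  proof -
    have "((\<lambda>x. F2 (t, x)) has_derivative (\<lambda>h. f' (t, x) (0, h))) (at x within UNIV)"
      by (rule has_derivative_in_compose2[OF der, where f="\<lambda>x. (t, x)" and s=UNIV])
         (use t in \<open>auto simp: S0_def intro!: derivative_eq_intros\<close>)
    then show ?thesis by (simp add: F2_def)
  qed
  have cD: "isCont (\<lambda>x. f' (t, x) (0, h)) x0" if t: "t \<in> {0..T}" for t h x0
  proof -
    have "continuous_on UNIV (\<lambda>x. f' (t, x))"
      by (rule continuous_on_compose2[OF cf', where f="\<lambda>x. (t, x)" and s=UNIV]) (use t in \<open>auto simp: S0_def intro!: continuous_intros\<close>)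
    then have "continuous_on UNIV (\<lambda>x. blinfun_apply (f' (t, x)) (0, h))"
      by (intro continuous_intros) auto
    then show ?thesis by (simp add: continuous_on_eq_continuous_at)
  qed
  define K where "K = (\<lambda>p. (fst p, xt (fst p) + snd p)) ` ({0..T} \<times> cball (0::'a) 1)"
  have Kc: "compact K" unfolding K_def
  proof (rule compact_continuous_image)
    show "compact ({0..T} \<times> cball (0::'a) 1)" by (intro compact_Times) auto
    have "continuous_on ({0..T} \<times> cball (0::'a) 1) (\<lambda>p. xt (fst p))"
      by (rule continuous_on_compose2[OF assms(5)]) (auto intro!: continuous_intros)
    then show "continuous_on ({0..T} \<times> cball (0::'a) 1) (\<lambda>p. (fst p, xt (fst p) + snd p))"
      by (intro continuous_intros) auto
  qed
  have KS: "K \<subseteq> S0" by (auto simp: K_def S0_def)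
  have inK: "(t, s) \<in> K" if "t \<in> {0..T}" "norm (s - xt t) \<le> 1" for t s
    unfolding K_def using that by (intro image_eqI[of _ _ "(t, s - xt t)"]) auto
  have cK: "continuous_on K f'" using continuous_on_subset[OF cf' KS] .
  obtain L0 where L0: "L0 > 0" "\<And>p. p \<in> K \<Longrightarrow> norm (f' p) \<le> L0"
    using compact_imp_bounded[OF compact_continuous_image[OF cK Kc]] unfolding bounded_pos by auto
  define L where "L = L0"
  have L: "L \<ge> 0" using L0 by (simp add: L_def)
  have uc: "uniformly_continuous_on K f'" by (rule compact_uniformly_continuous[OF cK Kc])
  have SS: "\<exists>d>0. \<forall>t\<in>{0..T}. \<forall>x v ys ws. dist (xt t) x \<le> d \<longrightarrow> dist (- f t (xt t)) v \<le> d
     \<longrightarrow> (x, v) \<in> gph F \<longrightarrow> (ys, ws) \<in> coderiv_gph F x v \<longrightarrow>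
     \<bar>inner ws (x - xt t) - inner ys (v - - f t (xt t))\<bar>
        \<le> e * pnorm (ws, ys) * pnorm ((x, v) - (xt t, - f t (xt t)))" if e: "e > 0" for e
  proof -
    obtain d where d: "d > 0" and H: "\<forall>(u, z)\<in>((\<lambda>t. (xt t, - f t (xt t))) ` {0..T}).
        \<forall>(x, y)\<in>(cball u d \<times> cball z d) \<inter> gph F.
        \<forall>(ys, xs)\<in>coderiv_gph F x y.
          \<bar>inner xs (x - u) - inner ys (y - z)\<bar> \<le> e * pnorm (xs, ys) * pnorm ((x, y) - (u, z))"
      using assms(7) e unfolding uniformly_semismooth_star_def by blast
    show ?thesis
    proof (intro exI[of _ d] conjI d ballI allI impI)
      fix t x v ys ws
      assume t: "t \<in> {0..T}" and h: "dist (xt t) x \<le> d" "dist (- f t (xt t)) v \<le> d"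
        "(x, v) \<in> gph F" "(ys, ws) \<in> coderiv_gph F x v"
      have "(xt t, - f t (xt t)) \<in> (\<lambda>t. (xt t, - f t (xt t))) ` {0..T}" using t by blast
      with H have "\<forall>(x, y)\<in>(cball (xt t) d \<times> cball (- f t (xt t)) d) \<inter> gph F.
        \<forall>(ys, xs)\<in>coderiv_gph F x y.
          \<bar>inner xs (x - xt t) - inner ys (y - - f t (xt t))\<bar> \<le> e * pnorm (xs, ys) * pnorm ((x, y) - (xt t, - f t (xt t)))"
        by fast
      moreover have "(x, v) \<in> (cball (xt t) d \<times> cball (- f t (xt t)) d) \<inter> gph F" using h by auto
      ultimately show "\<bar>inner ws (x - xt t) - inner ys (v - - f t (xt t))\<bar>
        \<le> e * pnorm (ws, ys) * pnorm ((x, v) - (xt t, - f t (xt t)))" using h(4) by fast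
    qed
  qed
  show ?thesis
  proof (intro allI impI)
    fix e :: real assume e: "e > 0"
    define \<eta> where "\<eta> = min 1 (e / 2)"
    have eta: "\<eta> > 0" "\<eta> \<le> 1" "\<eta> \<le> e / 2" using e by (auto simp: \<eta>_def)
    define e1 where "e1 = e / (2 * ((1 + L) * (L + 2)))"
    have e1: "e1 > 0" using e L by (simp add: e1_def)
    obtain d1 where d1: "d1 > 0" and SS1: "\<forall>t\<in>{0..T}. \<forall>x v ys ws. dist (xt t) x \<le> d1 \<longrightarrow> dist (- f t (xt t)) v \<le> d1
     \<longrightarrow> (x, v) \<in> gph F \<longrightarrow> (ys, ws) \<in> coderiv_gph F x v \<longrightarrow>
     \<bar>inner ws (x - xt t) - inner ys (v - - f t (xt t))\<bar>
        \<le> e1 * pnorm (ws, ys) * pnorm ((x, v) - (xt t, - f t (xt t)))"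
      using SS[OF e1] by blast
    obtain \<rho> where rho: "\<rho> > 0" "\<And>p q. p \<in> K \<Longrightarrow> q \<in> K \<Longrightarrow> dist q p < \<rho> \<Longrightarrow> dist (f' q) (f' p) < \<eta>"
      using uc eta(1) unfolding uniformly_continuous_on_def by metis
    define d where "d = min 1 (min (\<rho> / 2) (d1 / (L + 2)))"
    have d: "d > 0" "d \<le> 1" "d < \<rho>" "(L + 2) * d \<le> d1" "d \<le> d1"
    proof -
      show "d > 0" "d \<le> 1" "d < \<rho>" using rho d1 L by (auto simp: d_def)
      have "(L + 2) * d \<le> (L + 2) * (d1 / (L + 2))" using L by (intro mult_left_mono) (auto simp: d_def)
      also have "\<dots> = d1" using L by simp
      finally show "(L + 2) * d \<le> d1" .
      then show "d \<le> d1" using L \<open>d > 0\<close> by (smt (verit) mult_le_cancel_right1)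
    qed
    show "\<exists>d>0. \<forall>t\<in>{0..T}.
           \<forall>(x, y)\<in>(cball (xt t) d \<times> cball 0 d) \<inter> gph (\<lambda>z. (\<lambda>v. f t z + v) ` F z).
             \<forall>(ys, xs)\<in>coderiv_gph (\<lambda>z. (\<lambda>v. f t z + v) ` F z) x y.
               \<bar>inner xs (x - xt t) - inner ys y\<bar> \<le> e * pnorm (xs, ys) * pnorm ((x, y) - (xt t, 0))"
    proof (intro exI[of _ d] conjI d(1) ballI, clarify)
      fix t x y ys xs
      assume t: "t \<in> {0..T}" and hx: "x \<in> cball (xt t) d" and hy: "y \<in> cball 0 d"
        and xyG: "(x, y) \<in> gph (\<lambda>z. (\<lambda>v. f t z + v) ` F z)"
        and cod: "(ys, xs) \<in> coderiv_gph (\<lambda>z. (\<lambda>v. f t z + v) ` F z) x y"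
      define u where "u = xt t"
      define D where "D = (\<lambda>h. f' (t, x) (0, h))"
      define v where "v = y - f t x"
      define z where "z = - f t u"
      define ws where "ws = xs - adjT D ys"
      have xu: "norm (x - u) \<le> d" using hx by (simp add: u_def dist_norm norm_minus_commute)
      have yn: "norm y \<le> d" using hy by simp
      have xK: "(t, x) \<in> K" using inK[OF t, of x] xu d(2) by (simp add: u_def)
      have linD: "linear D" using dg[OF t, of x] unfolding D_def
        by (simp add: has_derivative_def bounded_linear.linear)
      have Db: "norm (D h) \<le> L * norm h" for h
      proof -
        have "norm (D h) \<le> norm (f' (t, x)) * norm ((0::real), h)" unfolding D_def by (rule norm_blinfun)
        also have "\<dots> \<le> L * norm h" using L0(2)[OF xK] by (simp add: L_def mult_right_mono)
        finally show ?thesis .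
      qed
      have "(xs, - ys) \<in> limiting_normal_cone (gph (\<lambda>z. (\<lambda>v. f t z + v) ` F z)) (x, y)"
        using cod by (simp add: coderiv_gph_def)
      from lim_transform[where D="\<lambda>x h. f' (t, x) (0, h)", OF dg[OF t] cD[OF t] this]
      have "(ws, - ys) \<in> limiting_normal_cone (gph F) (x, v)"
        by (simp add: ws_def v_def D_def adjT_neg)
      then have codF: "(ys, ws) \<in> coderiv_gph F x v" by (simp add: coderiv_gph_def)
      have xvF: "(x, v) \<in> gph F" using xyG gph_shift_iff[of x y "f t" F] by (simp add: v_def)
      define Sg where "Sg = (\<lambda>s. (t, u) + s *\<^sub>R ((t, x) - (t, u))) ` {0..1::real}"
      have SgK: "p \<in> K" and Sgd: "dist p (t, x) < \<rho>" if p: "p \<in> Sg" for p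
      proof -
        obtain s where s: "s \<in> {0..1}" "p = (t, u + s *\<^sub>R (x - u))" using p by (auto simp: Sg_def algebra_simps)
        have "norm (s *\<^sub>R (x - u)) \<le> norm (x - u)" using s(1) by (auto simp: mult_left_le_one_le)
        then show "p \<in> K" using inK[OF t, of "u + s *\<^sub>R (x - u)"] s xu d(2) by (simp add: u_def)
        have "p - (t, x) = (0, (1 - s) *\<^sub>R (u - x))" using s by (simp add: algebra_simps)
        then have "dist p (t, x) = norm ((1 - s) *\<^sub>R (u - x))" by (simp add: dist_norm)
        also have "\<dots> \<le> norm (u - x)" using s(1) by (auto simp: mult_left_le_one_le)
        also have "\<dots> < \<rho>" using xu d(3) by (simp add: norm_minus_commute)
        finally show "dist p (t, x) < \<rho>" .
      qed
      have lin: "norm (F2 (t, x) - F2 (t, u) - blinfun_apply (f' (t, x)) ((t, x) - (t, u))) \<le> norm ((t, x) - (t, u)) * \<eta>"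
      proof (rule differentiable_bound_linearization[where S = Sg])
        show "(t, u) + s *\<^sub>R ((t, x) - (t, u)) \<in> Sg" if "s \<in> {0..1}" for s using that unfolding Sg_def by (rule imageI)
        show "(F2 has_derivative blinfun_apply (f' p)) (at p within Sg)" if "p \<in> Sg" for p
        proof -
          have "Sg \<subseteq> S0" using SgK KS by blast
          then show ?thesis using has_derivative_subset[OF der[of p]] SgK[OF that] KS by blast
        qed
        show "onorm (blinfun_apply (f' p) - blinfun_apply (f' (t, x))) \<le> \<eta>" if "p \<in> Sg" for p
        proof -
          have "onorm (blinfun_apply (f' p) - blinfun_apply (f' (t, x))) = norm (f' p - f' (t, x))"
            by (simp add: norm_blinfun.rep_eq blinfun.diff_left[abs_def] fun_diff_def)
          also have "\<dots> < \<eta>" using rho(2)[OF xK SgK[OF that] Sgd[OF that]] by (simp add: dist_norm)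
          finally show ?thesis by simp
        qed
        show "(t, x) \<in> Sg" unfolding Sg_def by (rule image_eqI[of _ _ 1]) auto
      qed
      define r where "r = f t x - f t u - D (x - u)"
      have rb: "norm r \<le> \<eta> * norm (x - u)" using lin by (simp add: r_def F2_def D_def mult.commute)
      have vz: "v - z = y - D (x - u) - r" by (simp add: v_def z_def r_def)
      have vzb: "norm (v - z) \<le> norm y + (L + 1) * norm (x - u)"
      proof -
        have "norm (v - z) \<le> norm y + norm (D (x - u)) + norm r" unfolding vz
          by (smt (verit) norm_triangle_ineq4)
        then show ?thesis using Db[of "x - u"] rb eta(2) mult_right_mono[OF eta(2), of "norm (x - u)"]
          by (simp add: algebra_simps)
      qed
      have "norm y + (L + 1) * norm (x - u) \<le> d + (L + 1) * d"
        using yn xu L by (intro add_mono mult_left_mono) auto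
      then have vzd: "norm (v - z) \<le> d1" using vzb d(4) by (simp add: algebra_simps)
      have main: "\<bar>inner ws (x - u) - inner ys (v - z)\<bar> \<le> e1 * pnorm (ws, ys) * pnorm ((x, v) - (u, z))"
        using SS1 t xu d(5) vzd xvF codF unfolding u_def z_def
        by (auto simp: dist_norm norm_minus_commute)
      have ident: "inner xs (x - u) - inner ys y = (inner ws (x - u) - inner ys (v - z)) - inner ys r"
        by (simp add: ws_def vz inner_diff_left inner_diff_right adjT_inner[OF linD] linear_diff[OF linD])
      define P1 where "P1 = pnorm (xs, ys)"
      define P2 where "P2 = pnorm ((x, y) - (u, 0))"
      have P1: "norm xs \<le> P1" "norm ys \<le> P1" by (auto simp: P1_def pnorm_def)
      have P2: "norm (x - u) \<le> P2" "norm y \<le> P2" by (auto simp: P2_def pnorm_def)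
      have P20: "0 \<le> P2" "0 \<le> P1" using P1 P2 norm_ge_zero order_trans by metis+
      have "norm ws \<le> norm xs + norm (adjT D ys)" unfolding ws_def by (rule norm_triangle_ineq4)
      also have "\<dots> \<le> P1 + L * P1" using adjT_norm[OF linD Db L, of ys] P1 L
        by (smt (verit) mult_left_mono)
      finally have "norm ws \<le> (1 + L) * P1" by (simp add: algebra_simps)
      moreover have "norm ys \<le> (1 + L) * P1" using P1(2) mult_nonneg_nonneg[OF L P20(2)] by (simp add: algebra_simps)
      ultimately have Q1: "pnorm (ws, ys) \<le> (1 + L) * P1" by (simp add: pnorm_def)
      have "norm (v - z) \<le> P2 + (L + 1) * P2" using vzb P2 L
        by (smt (verit) mult_left_mono)
      moreover have "norm (x - u) \<le> (L + 2) * P2" using P2(1) P20(1) mult_nonneg_nonneg[OF L P20(1)] by (simp add: algebra_simps)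
      ultimately have Q2: "pnorm ((x, v) - (u, z)) \<le> (L + 2) * P2" by (simp add: pnorm_def algebra_simps)
      have Q0: "0 \<le> pnorm (ws, ys)" "0 \<le> pnorm ((x, v) - (u, z))" by (auto simp: pnorm_def le_max_iff_disj)
      have "e1 * pnorm (ws, ys) * pnorm ((x, v) - (u, z)) \<le> e1 * ((1 + L) * P1) * ((L + 2) * P2)"
        using Q0 Q1 Q2 e1 P20 L by (intro mult_mono mult_left_mono) auto
      also have "\<dots> = (e1 * ((1 + L) * (L + 2))) * P1 * P2" by (simp add: ac_simps)
      also have "\<dots> = e / 2 * P1 * P2"
      proof -
        have c: "(1 + L) * (L + 2) > 0" using L by (intro mult_pos_pos) auto
        have gen: "\<And>c::real. c \<noteq> 0 \<Longrightarrow> e / (2 * c) * c = e / 2" by (simp add: field_simps)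
        have "e1 * ((1 + L) * (L + 2)) = e / 2" unfolding e1_def by (rule gen) (use c in linarith)
        then show ?thesis by (simp only:)
      qed
      finally have T1: "\<bar>inner ws (x - u) - inner ys (v - z)\<bar> \<le> e / 2 * P1 * P2" using main by linarith
      have "\<bar>inner ys r\<bar> \<le> norm ys * norm r" by (rule Cauchy_Schwarz_ineq2)
      also have "\<dots> \<le> P1 * (\<eta> * P2)" using P1 rb P2 eta P20
        by (intro mult_mono) (auto intro: order_trans mult_left_mono)
      also have "\<dots> \<le> P1 * (e / 2 * P2)" using eta P20 by (intro mult_left_mono mult_right_mono) auto
      finally have T2: "\<bar>inner ys r\<bar> \<le> e / 2 * P1 * P2" by (simp add: algebra_simps)
      have "\<bar>inner xs (x - u) - inner ys y\<bar> \<le> e * P1 * P2" unfolding ident using T1 T2 by linarith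
      then show "\<bar>inner xs (x - xt t) - inner ys y\<bar> \<le> e * pnorm (xs, ys) * pnorm ((x, y) - (xt t, 0))"
        by (simp add: u_def P1_def P2_def)
    qed
  qed
qed

end
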